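(* In $\mathrm{HMF}(\mathbb{C}^2,\Gamma_W,W)$ the object $K_f$ is exceptional, i.e.\ $\mathrm{Hom}^\bullet(K_f,K_f)$ consists only of scalar multiples of the identity, in degree $0$.
   Context: Let $p,q\ge2$ be integers and $W=x^py+xy^q$. Let $L$ be the abelian group generated by $\vec x,\vec y,\vec c$ modulo $p\vec x+\vec y=\vec x+q\vec y=\vec c$; $S=\mathbb{C}[x,y]$ is $L$-graded with $\deg x=\vec x$, $\deg y=\vec y$, and $R=S/(W)$. $\mathrm{HMF}(\mathbb{C}^2,\Gamma_W,W)$ is the homotopy category of $L$-graded matrix factorisations of $W$, equivalent to $D^b(\mathrm{gr}R)/\mathrm{Perf}(\mathrm{gr}R)$, in which a finitely generated $L$-graded $R$-module is identified with its stabilisation; $\mathrm{Hom}^n(X,Y)=\mathrm{Hom}(X,Y[n])$. Let $f=x^{p-1}+y^{q-1}$ and $K_f=R/(f)$. *)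

theory Defs
  imports Complex_Main "HOL-Computational_Algebra.Polynomial"
begin

text \<open>Polynomials in C[x,y] are represented as complex poly poly:
  the outer variable is x, the inner one is y, so the coefficient of
  x^i y^j in s is coeff (coeff s i) j.\<close>

type_synonym poly2 = "complex poly poly"

definition xv :: poly2 where "xv = monom 1 1"
definition yv :: poly2 where "yv = [:[:0, 1:]:]"
definition cst :: "complex \<Rightarrow> poly2" where "cst a = [:[:a:]:]"

text \<open>The grading group L: elements are written (a,b) = a x + b y
  (x, y generate L since c = p x + y); relations: (p-1) x = (q-1) y.\<close>

type_synonym Ldeg = "int \<times> int"

definition Lrel :: "nat \<Rightarrow> nat \<Rightarrow> Ldeg \<Rightarrow> Ldeg \<Rightarrow> bool" where
  "Lrel p q u v \<longleftrightarrow> (\<exists>k::int. fst u - fst v = k * (int p - 1) \<and> snd u - snd v = - k * (int q - 1))"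

definition ladd :: "Ldeg \<Rightarrow> Ldeg \<Rightarrow> Ldeg" where "ladd u v = (fst u + fst v, snd u + snd v)"
definition lsub :: "Ldeg \<Rightarrow> Ldeg \<Rightarrow> Ldeg" where "lsub u v = (fst u - fst v, snd u - snd v)"
definition lscale :: "int \<Rightarrow> Ldeg \<Rightarrow> Ldeg" where "lscale k u = (k * fst u, k * snd u)"

definition cvec :: "nat \<Rightarrow> Ldeg" where "cvec p = (int p, 1)"

definition Wpoly :: "nat \<Rightarrow> nat \<Rightarrow> poly2" where
  "Wpoly p q = xv ^ p * yv + xv * yv ^ q"

definition fpoly :: "nat \<Rightarrow> nat \<Rightarrow> poly2" where
  "fpoly p q = xv ^ (p - 1) + yv ^ (q - 1)"

definition hom_deg :: "nat \<Rightarrow> nat \<Rightarrow> Ldeg \<Rightarrow> poly2 \<Rightarrow> bool" where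
  "hom_deg p q l s \<longleftrightarrow> (\<forall>i j. coeff (coeff s i) j \<noteq> 0 \<longrightarrow> Lrel p q (int i, int j) l)"

text \<open>Matrices over S: nat => nat => poly2, used only on index ranges.
  A graded free module is a list of generator degrees; a degree-0 map
  F -> G is a matrix M (rows: G, columns: F) with M i j homogeneous of
  degree deg(e_j) - deg(e'_i).\<close>

type_synonym mat2 = "nat \<Rightarrow> nat \<Rightarrow> poly2"

definition graded_map :: "nat \<Rightarrow> nat \<Rightarrow> Ldeg list \<Rightarrow> Ldeg list \<Rightarrow> mat2 \<Rightarrow> bool" where
  "graded_map p q gs gt M \<longleftrightarrow>
     (\<forall>i<length gt. \<forall>j<length gs. hom_deg p q (lsub (gs ! j) (gt ! i)) (M i j))"

definition mmul :: "nat \<Rightarrow> mat2 \<Rightarrow> mat2 \<Rightarrow> mat2" where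
  "mmul n A B = (\<lambda>i j. \<Sum>k<n. A i k * B k j)"

definition madd :: "mat2 \<Rightarrow> mat2 \<Rightarrow> mat2" where "madd A B = (\<lambda>i j. A i j + B i j)"
definition msub :: "mat2 \<Rightarrow> mat2 \<Rightarrow> mat2" where "msub A B = (\<lambda>i j. A i j - B i j)"
definition mneg :: "mat2 \<Rightarrow> mat2" where "mneg A = (\<lambda>i j. - A i j)"
definition mscal :: "poly2 \<Rightarrow> mat2" where "mscal a = (\<lambda>i j. if i = j then a else 0)"

definition meq :: "nat \<Rightarrow> nat \<Rightarrow> mat2 \<Rightarrow> mat2 \<Rightarrow> bool" where
  "meq m n A B \<longleftrightarrow> (\<forall>i<m. \<forall>j<n. A i j = B i j)"

text \<open>An L-graded matrix factorisation X0 --d0--> X1 --d1--> X0(c) of W.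
  Generators of X0, X1 have degrees g0, g1; the module M(l) has
  generator degrees shifted by -l.\<close>

record gmf =
  g0 :: "Ldeg list"
  g1 :: "Ldeg list"
  d0 :: mat2
  d1 :: mat2

definition twist_gens :: "Ldeg \<Rightarrow> Ldeg list \<Rightarrow> Ldeg list" where
  "twist_gens l gs = map (\<lambda>g. lsub g l) gs"

definition is_gmf :: "nat \<Rightarrow> nat \<Rightarrow> gmf \<Rightarrow> bool" where
  "is_gmf p q X \<longleftrightarrow>
     (let r = length (g0 X) in
       length (g1 X) = r \<and>
       graded_map p q (g0 X) (g1 X) (d0 X) \<and>
       graded_map p q (g1 X) (twist_gens (cvec p) (g0 X)) (d1 X) \<and>
       meq r r (mmul r (d1 X) (d0 X)) (mscal (Wpoly p q)) \<and>
       meq r r (mmul r (d0 X) (d1 X)) (mscal (Wpoly p q)))"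

definition twist :: "Ldeg \<Rightarrow> gmf \<Rightarrow> gmf" where
  "twist l X = X\<lparr>g0 := twist_gens l (g0 X), g1 := twist_gens l (g1 X)\<rparr>"

definition shift1 :: "nat \<Rightarrow> gmf \<Rightarrow> gmf" where
  "shift1 p X = \<lparr>g0 = g1 X, g1 = twist_gens (cvec p) (g0 X), d0 = mneg (d1 X), d1 = mneg (d0 X)\<rparr>"

text \<open>X[n] for n :: int, using [2] = (c): X[2k] = X(kc), X[2k+1] = X(kc)[1].\<close>
definition shiftN :: "nat \<Rightarrow> int \<Rightarrow> gmf \<Rightarrow> gmf" where
  "shiftN p n X = (if even n then twist (lscale (n div 2) (cvec p)) X
                   else shift1 p (twist (lscale (n div 2) (cvec p)) X))"

definition is_mor :: "nat \<Rightarrow> nat \<Rightarrow> gmf \<Rightarrow> gmf \<Rightarrow> mat2 \<Rightarrow> mat2 \<Rightarrow> bool" where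
  "is_mor p q X Y u0 u1 \<longleftrightarrow>
     (let rX = length (g0 X); rY = length (g0 Y) in
       graded_map p q (g0 X) (g0 Y) u0 \<and>
       graded_map p q (g1 X) (g1 Y) u1 \<and>
       meq rY rX (mmul rY (d0 Y) u0) (mmul rX u1 (d0 X)) \<and>
       meq rY rX (mmul rY (d1 Y) u1) (mmul rX u0 (d1 X)))"

definition null_htp :: "nat \<Rightarrow> nat \<Rightarrow> gmf \<Rightarrow> gmf \<Rightarrow> mat2 \<Rightarrow> mat2 \<Rightarrow> bool" where
  "null_htp p q X Y u0 u1 \<longleftrightarrow>
     (let rX = length (g0 X); rY = length (g0 Y) in
       \<exists>h0 h1.
         graded_map p q (g0 X) (twist_gens (lscale (-1) (cvec p)) (g1 Y)) h0 \<and>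
         graded_map p q (g1 X) (g0 Y) h1 \<and>
         meq rY rX u0 (madd (mmul rY (d1 Y) h0) (mmul rX h1 (d0 X))) \<and>
         meq rY rX u1 (madd (mmul rY (d0 Y) h1) (mmul rX h0 (d1 X))))"

definition homotopic :: "nat \<Rightarrow> nat \<Rightarrow> gmf \<Rightarrow> gmf \<Rightarrow> mat2 \<Rightarrow> mat2 \<Rightarrow> mat2 \<Rightarrow> mat2 \<Rightarrow> bool" where
  "homotopic p q X Y u0 u1 v0 v1 \<longleftrightarrow> null_htp p q X Y (msub u0 v0) (msub u1 v1)"

text \<open>K_f = R/(f): since W = xy f, its stabilisation is the rank one
  factorisation S(-deg f) --f--> S --xy--> S(c - deg f), with
  deg f = (p-1) x; coker d0 = S/(f).\<close>
definition Kf :: "nat \<Rightarrow> nat \<Rightarrow> gmf" where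
  "Kf p q = \<lparr>g0 = [(int p - 1, 0)], g1 = [(0, 0)],
             d0 = (\<lambda>i j. fpoly p q), d1 = (\<lambda>i j. xv * yv)\<rparr>"

end

theory Submission
  imports Defs
begin

definition mn :: "complex \<Rightarrow> nat \<Rightarrow> nat \<Rightarrow> poly2" where
  "mn c i j = monom (monom c j) i"

abbreviation cf :: "poly2 \<Rightarrow> nat \<Rightarrow> nat \<Rightarrow> complex" where
  "cf s i j \<equiv> coeff (coeff s i) j"

lemma cf_mn: "cf (mn c i j) a b = (if a = i \<and> b = j then c else 0)"
  by (auto simp: mn_def coeff_monom)

lemma mn_mult: "mn a i j * mn b k l = mn (a * b) (i + k) (j + l)"
  by (simp add: mn_def mult_monom)

lemma mn_add: "mn a i j + mn b i j = mn (a + b) i j"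
  by (simp add: mn_def add_monom)

lemma mn_neg: "- mn a i j = mn (- a) i j"
  by (simp add: mn_def minus_monom)

lemma mn_0[simp]: "mn 0 i j = 0"
  by (simp add: mn_def)

lemma xv_pow: "xv ^ n = mn 1 n 0"
  by (simp add: xv_def mn_def monom_power)

lemma yv_pow: "yv ^ n = mn 1 0 n"
  by (simp add: yv_def mn_def monom_0 poly_const_pow monom_altdef)

lemma xv_mn: "xv = mn 1 1 0" using xv_pow[of 1] by simp
lemma yv_mn: "yv = mn 1 0 1" using yv_pow[of 1] by simp
lemma cst_mn: "cst c = mn c 0 0" by (simp add: cst_def mn_def monom_0)

lemma xy_mn: "xv * yv = mn 1 1 1"
  by (simp add: xv_mn yv_mn mn_mult)

lemma f_mn: "fpoly p q = mn 1 (p-1) 0 + mn 1 0 (q-1)"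
  by (simp add: fpoly_def xv_pow yv_pow)

lemma poly2_sum: "s = (\<Sum>i\<le>degree s. \<Sum>j\<le>degree (coeff s i). mn (cf s i j) i j)"
proof -
  have "s = (\<Sum>i\<le>degree s. monom (coeff s i) i)" by (simp add: poly_as_sum_of_monoms)
  also have "\<dots> = (\<Sum>i\<le>degree s. \<Sum>j\<le>degree (coeff s i). mn (cf s i j) i j)"
    unfolding mn_def monom_sum[symmetric] poly_as_sum_of_monoms ..
  finally show ?thesis .
qed


lemma hom_deg_mn: "c = 0 \<or> Lrel p q (int i, int j) l \<Longrightarrow> hom_deg p q l (mn c i j)"
  by (auto simp: hom_deg_def cf_mn split: if_splits)

lemma hom_deg_0[simp]: "hom_deg p q l 0"
  by (simp add: hom_deg_def)

lemma hom_deg_add: "hom_deg p q l a \<Longrightarrow> hom_deg p q l b \<Longrightarrow> hom_deg p q l (a + b)"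
  unfolding hom_deg_def coeff_add by (metis add.right_neutral add_0)

lemma hom_deg_neg: "hom_deg p q l a \<Longrightarrow> hom_deg p q l (- a)"
  by (auto simp: hom_deg_def)

lemma hom_degD: "hom_deg p q l a \<Longrightarrow> cf a i j \<noteq> 0 \<Longrightarrow> Lrel p q (int i, int j) l"
  by (auto simp: hom_deg_def)

lemma Kf_gmf:
  assumes "p \<ge> 2" "q \<ge> 2"
  shows "is_gmf p q (Kf p q)"
proof -
  have W: "Wpoly p q = xv * yv * fpoly p q"
  proof -
    have "xv ^ p = xv * xv ^ (p - 1)" using assms by (cases p) auto
    moreover have "yv ^ q = yv * yv ^ (q - 1)" using assms by (cases q) auto
    ultimately show ?thesis by (simp add: Wpoly_def fpoly_def algebra_simps)
  qed
  have hf: "hom_deg p q (int p - 1, 0) (fpoly p q)"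
    unfolding f_mn using assms
    by (intro hom_deg_add hom_deg_mn) (auto simp: Lrel_def intro!: exI[of _ 0] exI[of _ "-1"])
  have hxy: "hom_deg p q (1, 1) (xv * yv)"
    unfolding xy_mn by (intro hom_deg_mn) (auto simp: Lrel_def)
  show ?thesis
    using hf hxy by (simp add: is_gmf_def Kf_def graded_map_def meq_def mmul_def mscal_def
        twist_gens_def lsub_def cvec_def W algebra_simps)
qed


lemma not_null:
  assumes "p \<ge> 2" "q \<ge> 2"
  shows "\<not> null_htp p q (Kf p q) (Kf p q) (mscal 1) (mscal 1)"
proof
  assume "null_htp p q (Kf p q) (Kf p q) (mscal 1) (mscal 1)"
  then obtain h0 h1 where "1 = xv * yv * h0 0 0 + h1 0 0 * fpoly p q"
    by (auto simp: null_htp_def Kf_def meq_def mmul_def madd_def mscal_def)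
  hence "cf 1 0 0 = cf (xv * yv * h0 0 0 + h1 0 0 * fpoly p q) 0 0" by simp
  moreover have "cf (fpoly p q) 0 0 = 0" using assms by (simp add: f_mn cf_mn)
  ultimately show False by (simp add: coeff_mult_0 xy_mn cf_mn)
qed


definition Rep :: "nat \<Rightarrow> nat \<Rightarrow> int \<Rightarrow> poly2 \<Rightarrow> bool" where
  "Rep p q k u \<longleftrightarrow> (\<exists>h0 h1. hom_deg p q (k * int p - 1, k - 1) h0 \<and>
      hom_deg p q (k * int p - (int p - 1), k) h1 \<and> u = xv * yv * h0 + h1 * fpoly p q)"

lemma Rep_0: "Rep p q k 0"
  unfolding Rep_def by (rule exI[of _ 0], rule exI[of _ 0]) simp

lemma Rep_add: "Rep p q k a \<Longrightarrow> Rep p q k b \<Longrightarrow> Rep p q k (a + b)"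
proof -
  assume "Rep p q k a" "Rep p q k b"
  then obtain h0 h1 h0' h1' where "hom_deg p q (k * int p - 1, k - 1) h0"
      "hom_deg p q (k * int p - (int p - 1), k) h1" "a = xv * yv * h0 + h1 * fpoly p q"
      "hom_deg p q (k * int p - 1, k - 1) h0'"
      "hom_deg p q (k * int p - (int p - 1), k) h1'" "b = xv * yv * h0' + h1' * fpoly p q"
    unfolding Rep_def by blast
  thus ?thesis unfolding Rep_def
    by (intro exI[of _ "h0 + h0'"] exI[of _ "h1 + h1'"]) (simp add: hom_deg_add algebra_simps)
qed

lemma Rep_sum: "finite A \<Longrightarrow> (\<forall>x\<in>A. Rep p q k (F x)) \<Longrightarrow> Rep p q k (sum F A)"
  by (induction A rule: finite_induct) (auto simp: Rep_0 Rep_add)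

lemma excl_x:
  assumes "p \<ge> 2" "q \<ge> 2" "k \<noteq> 0" "Lrel p q (int i, int 0) (k * int p, k)"
  shows "i \<ge> p"
proof -
  from assms(4) obtain m where m1: "int i - k * int p = m * (int p - 1)" and m2: "0 - k = - m * (int q - 1)"
    by (auto simp: Lrel_def)
  have k: "k = m * (int q - 1)" using m2 by simp
  have i: "int i = m * (int p * int q - 1)" using m1 unfolding k by (simp add: algebra_simps)
  have "m \<noteq> 0" using k assms(3) by auto
  moreover have pq: "int p * int q - 1 \<ge> int p"
  proof -
    have "int p * int q \<ge> int p * 2" using assms by (intro mult_left_mono) auto
    thus ?thesis using assms by linarith
  qed
  moreover have "m \<ge> 0"
  proof (rule ccontr)
    assume "\<not> m \<ge> 0"
    moreover have "int p * int q - 1 > 0" using pq assms by linarith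
    ultimately have "m * (int p * int q - 1) < 0" by (intro mult_neg_pos) auto
    thus False using i by simp
  qed
  ultimately have "m * (int p * int q - 1) \<ge> 1 * (int p * int q - 1)"
    by (intro mult_right_mono) auto
  hence "int p * int q - 1 \<le> int i" using i by simp
  hence "int p \<le> int i" using pq by linarith
  thus ?thesis by simp
qed

lemma excl_y:
  assumes "p \<ge> 2" "q \<ge> 2" "k \<noteq> 0" "Lrel p q (int 0, int j) (k * int p, k)"
  shows "j \<ge> q"
proof -
  from assms(4) obtain m where m1: "0 - k * int p = m * (int p - 1)" and m2: "int j - k = - m * (int q - 1)"
    by (auto simp: Lrel_def)
  define t where "t = - (m + k)"
  have k: "k = t * (int p - 1)" using m1 unfolding t_def by (simp add: algebra_simps)
  have m: "m = - t * int p" using m1 k unfolding t_def by (simp add: algebra_simps)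
  have j: "int j = t * (int p * int q - 1)" using m2 unfolding k m by (simp add: algebra_simps)
  have "t \<noteq> 0" using k assms(3) by auto
  moreover have pq: "int p * int q - 1 \<ge> int q"
  proof -
    have "int p * int q \<ge> 2 * int q" using assms by (intro mult_right_mono) auto
    thus ?thesis using assms by linarith
  qed
  moreover have "t \<ge> 0"
  proof (rule ccontr)
    assume "\<not> t \<ge> 0"
    moreover have "int p * int q - 1 > 0" using pq assms by linarith
    ultimately have "t * (int p * int q - 1) < 0" by (intro mult_neg_pos) auto
    thus False using j by simp
  qed
  ultimately have "t * (int p * int q - 1) \<ge> 1 * (int p * int q - 1)"
    by (intro mult_right_mono) auto
  hence "int p * int q - 1 \<le> int j" using j by simp
  hence "int q \<le> int j" using pq by linarith
  thus ?thesis by simp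
qed

lemma Rep_mn:
  assumes "p \<ge> 2" "q \<ge> 2" "k \<noteq> 0" "Lrel p q (int i, int j) (k * int p, k)"
  shows "Rep p q k (mn c i j)"
proof -
  from assms(4) obtain m where m1: "int i - k * int p = m * (int p - 1)" and m2: "int j - k = - m * (int q - 1)"
    by (auto simp: Lrel_def)
  obtain e where e: "p = e + 2" using assms(1) by (metis add.commute le_Suc_ex)
  obtain b where b: "q = b + 2" using assms(2) by (metis add.commute le_Suc_ex)
  show ?thesis
  proof (cases "i \<ge> 1 \<and> j \<ge> 1")
    case True
    then obtain a d where ad: "i = a + 1" "j = d + 1" by (metis add.commute le_Suc_ex)
    show ?thesis unfolding Rep_def
      apply (rule exI[of _ "mn c a d"], rule exI[of _ 0])
      using m1 m2 by (auto simp: ad xy_mn mn_mult intro!: hom_deg_mn disjI2 simp: Lrel_def intro!: exI[of _ m])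
  next
    case False
    show ?thesis
    proof (cases "j = 0")
      case True
      hence "i \<ge> p" using excl_x[OF assms(1-3)] assms(4) by simp
      then obtain a where a: "i = a + p" by (metis add.commute le_Suc_ex)
      have h0: "hom_deg p q (k * int p - 1, k - 1) (mn (-c) a b)"
        apply (rule hom_deg_mn, rule disjI2, simp add: Lrel_def)
        apply (rule exI[of _ "m - 1"])
        using m1 m2 True by (simp add: a e b algebra_simps)
      have h1: "hom_deg p q (k * int p - (int p - 1), k) (mn c (a + 1) 0)"
        apply (rule hom_deg_mn, rule disjI2, simp add: Lrel_def)
        apply (rule exI[of _ "m"])
        using m1 m2 True by (simp add: a e b algebra_simps)
      have eq: "mn c i j = xv * yv * mn (-c) a b + mn c (a + 1) 0 * fpoly p q"
        using True by (simp add: a e b xy_mn f_mn mn_mult distrib_left mn_add)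
      show ?thesis unfolding Rep_def using h0 h1 eq by blast
    next
      case False
      hence i0: "i = 0" using \<open>\<not> (i \<ge> 1 \<and> j \<ge> 1)\<close> by auto
      hence "j \<ge> q" using excl_y[OF assms(1-3)] assms(4) by simp
      then obtain d where d: "j = d + q" by (metis add.commute le_Suc_ex)
      have h0: "hom_deg p q (k * int p - 1, k - 1) (mn (-c) e d)"
        apply (rule hom_deg_mn, rule disjI2, simp add: Lrel_def)
        apply (rule exI[of _ "m + 1"])
        using m1 m2 i0 by (simp add: d e b algebra_simps)
      have h1: "hom_deg p q (k * int p - (int p - 1), k) (mn c 0 (d + 1))"
        apply (rule hom_deg_mn, rule disjI2, simp add: Lrel_def)
        apply (rule exI[of _ "m + 1"])
        using m1 m2 i0 by (simp add: d e b algebra_simps)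
      have eq: "mn c i j = xv * yv * mn (-c) e d + mn c 0 (d + 1) * fpoly p q"
        using i0 by (simp add: d e b xy_mn f_mn mn_mult distrib_left mn_add)
      show ?thesis unfolding Rep_def using h0 h1 eq by blast
    qed
  qed
qed


lemma even_case:
  assumes "p \<ge> 2" "q \<ge> 2" "k \<noteq> 0" "hom_deg p q (k * int p, k) u"
  shows "Rep p q k u"
proof -
  have "Rep p q k (\<Sum>i\<le>degree u. \<Sum>j\<le>degree (coeff u i). mn (cf u i j) i j)"
  proof (intro Rep_sum ballI finite_atMost)
    fix i j
    show "Rep p q k (mn (cf u i j) i j)"
    proof (cases "cf u i j = 0")
      case True thus ?thesis by (simp add: Rep_0)
    next
      case False
      thus ?thesis using Rep_mn[OF assms(1-3)] hom_degD[OF assms(4) False] by blast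
    qed
  qed
  thus ?thesis using poly2_sum[of u] by simp
qed

lemma poly2_eqI: "(\<And>i j. cf a i j = cf b i j) \<Longrightarrow> a = b"
  by (intro poly_eqI) auto

lemma zero_case:
  assumes "p \<ge> 2" "q \<ge> 2" "hom_deg p q (0, 0) u"
  shows "u = cst (cf u 0 0)"
proof (rule poly2_eqI)
  fix i j
  show "cf u i j = cf (cst (cf u 0 0)) i j"
  proof (cases "cf u i j = 0")
    case False
    from hom_degD[OF assms(3) False] obtain m where
      "int i = m * (int p - 1)" "int j = - m * (int q - 1)" by (auto simp: Lrel_def)
    moreover have "m = 0"
    proof (rule ccontr)
      assume "m \<noteq> 0"
      hence "m > 0 \<or> m < 0" by auto
      thus False
      proof
        assume "m > 0" hence "- m * (int q - 1) < 0" using assms by (simp add: mult_pos_pos)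
        thus False using calculation by simp
      next
        assume "m < 0" hence "m * (int p - 1) < 0" using assms by (simp add: mult_neg_pos)
        thus False using calculation by simp
      qed
    qed
    ultimately show ?thesis by (simp add: cst_mn cf_mn)
  qed (auto simp: cst_mn cf_mn)
qed


lemma f_alt: "fpoly p q = monom 1 (p - 1) + [:monom 1 (q - 1):]"
  by (simp add: fpoly_def xv_def yv_def monom_power poly_const_pow monom_altdef)

lemma xv_alt: "xv = [:0, 1:]"
  by (simp add: xv_def monom_altdef)

lemma coeff_f0: "p \<ge> 2 \<Longrightarrow> coeff (fpoly p q) 0 = monom 1 (q - 1)"
  by (simp add: f_alt)

lemma divA:
  assumes "p \<ge> 2" "fpoly p q dvd xv * w"
  shows "fpoly p q dvd w"
proof -
  obtain v where v: "xv * w = fpoly p q * v" using assms(2) by (auto elim: dvdE)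
  have "coeff (xv * w) 0 = 0" by (simp add: coeff_mult_0 xv_alt)
  hence "monom 1 (q - 1) * coeff v 0 = 0" using v by (simp add: coeff_mult_0 coeff_f0[OF assms(1)])
  hence "poly v 0 = 0" by (simp add: poly_0_coeff_0)
  hence "[:- 0, 1:] dvd v" using dvd_iff_poly_eq_0[of 0 v] by simp
  then obtain v' where v': "v = xv * v'" by (auto simp: xv_alt elim: dvdE)
  have "xv * w = xv * (fpoly p q * v')" using v v' by (simp add: algebra_simps)
  hence "w = fpoly p q * v'" by (simp add: xv_alt)
  thus ?thesis by simp
qed

lemma coeff_const_mult: "coeff ([:c:] * w) n = c * coeff w n"
  by simp

lemma divB:
  assumes "p \<ge> 2" "q \<ge> 2" "fpoly p q dvd yv * w"
  shows "fpoly p q dvd w"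
proof -
  obtain v where v: "yv * w = fpoly p q * v" using assms(3) by (auto elim: dvdE)
  have "\<forall>m. [:0, 1:] dvd coeff v m"
  proof
    fix m
    have "poly (coeff (yv * w) (m + (p - 1))) 0 = 0" by (simp add: yv_def)
    hence "poly (coeff (fpoly p q * v) (m + (p - 1))) 0 = 0" using v by simp
    moreover have "poly (monom (1::complex) (q - 1)) 0 = 0" using assms(2)
      by (simp add: poly_monom)
    ultimately have "poly (coeff v m) 0 = 0"
      by (simp add: f_alt distrib_right coeff_monom_mult)
    thus "[:0, 1:] dvd coeff v m" using dvd_iff_poly_eq_0[of 0 "coeff v m"] by simp
  qed
  hence "[:[:0, 1:]:] dvd v" by (simp add: const_poly_dvd_iff)
  then obtain v' where v': "v = yv * v'" by (auto simp: yv_def elim: dvdE)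
  have "yv * w = yv * (fpoly p q * v')" using v v' by (simp add: algebra_simps)
  moreover have "yv \<noteq> 0" by (simp add: yv_def)
  ultimately have "w = fpoly p q * v'" using mult_left_cancel by blast
  thus ?thesis by simp
qed


lemma cf_fg: "cf (fpoly p q * g) a b =
   (if a < p - 1 then 0 else cf g (a - (p - 1)) b) + (if b < q - 1 then 0 else cf g a (b - (q - 1)))"
  by (simp add: f_alt distrib_right coeff_monom_mult)

lemma quot_hom:
  assumes "p \<ge> 2" "q \<ge> 2" "hom_deg p q (int p - 1 + k * int p, k) (fpoly p q * g)"
  shows "hom_deg p q (k * int p, k) g"
proof (rule ccontr)
  define D where "D = (k * int p, k)"
  define S where "S = {i. \<exists>j. cf g i j \<noteq> 0 \<and> \<not> Lrel p q (int i, int j) D}"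
  assume "\<not> hom_deg p q (k * int p, k) g"
  hence ne: "S \<noteq> {}" unfolding S_def D_def hom_deg_def by auto
  have fin: "finite S"
  proof (rule finite_subset[of _ "{..degree g}"])
    show "S \<subseteq> {..degree g}" unfolding S_def
      by (auto intro: le_degree)
  qed simp
  define i0 where "i0 = Max S"
  have "i0 \<in> S" unfolding i0_def using fin ne by simp
  then obtain j0 where j0: "cf g i0 j0 \<noteq> 0" "\<not> Lrel p q (int i0, int j0) D" unfolding S_def by auto
  have second: "(if j0 < q - 1 then 0 else cf g (i0 + (p - 1)) (j0 - (q - 1))) = 0"
  proof (cases "j0 < q - 1")
    case False
    show ?thesis
    proof (rule ccontr)
      assume nz: "(if j0 < q - 1 then 0 else cf g (i0 + (p - 1)) (j0 - (q - 1))) \<noteq> 0"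
      hence nz': "cf g (i0 + (p - 1)) (j0 - (q - 1)) \<noteq> 0" using False by simp
      show False
      proof (cases "Lrel p q (int (i0 + (p - 1)), int (j0 - (q - 1))) D")
        case True
        then obtain m where m: "int (i0 + (p - 1)) - fst D = m * (int p - 1)"
          "int (j0 - (q - 1)) - snd D = - m * (int q - 1)" by (auto simp: Lrel_def)
        have "Lrel p q (int i0, int j0) D" unfolding Lrel_def
          apply (rule exI[of _ "m - 1"])
          using m False assms by (simp add: of_nat_diff algebra_simps)
        thus False using j0 by simp
      next
        case False
        hence "i0 + (p - 1) \<in> S" using nz' unfolding S_def by auto
        hence "i0 + (p - 1) \<le> i0" using Max_ge[OF fin] unfolding i0_def by blast
        thus False using assms by simp
      qed
    qed
  qed simp
  have "cf (fpoly p q * g) (i0 + (p - 1)) j0 = cf g i0 j0 +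
     (if j0 < q - 1 then 0 else cf g (i0 + (p - 1)) (j0 - (q - 1)))"
    unfolding cf_fg by simp
  hence "cf (fpoly p q * g) (i0 + (p - 1)) j0 = cf g i0 j0"
    by (simp only: second) simp
  hence "cf (fpoly p q * g) (i0 + (p - 1)) j0 \<noteq> 0" using j0 by simp
  from hom_degD[OF assms(3) this] obtain m where
    m: "int (i0 + (p - 1)) - (int p - 1 + k * int p) = m * (int p - 1)"
       "int j0 - k = - m * (int q - 1)" by (auto simp: Lrel_def)
  have "Lrel p q (int i0, int j0) D" unfolding Lrel_def D_def
    apply (rule exI[of _ m])
    using m assms by (simp add: of_nat_diff algebra_simps)
  thus False using j0 by simp
qed


lemma f_nz: "p \<ge> 2 \<Longrightarrow> fpoly p q \<noteq> 0"
  using coeff_f0[of p q] by auto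

lemma odd_case:
  assumes "p \<ge> 2" "q \<ge> 2" "hom_deg p q (int p - 1 + k * int p, k) u0"
    "- (xv * yv * u0) = u1 * fpoly p q"
  shows "\<exists>g. hom_deg p q (k * int p, k) g \<and> u0 = g * fpoly p q - fpoly p q * 0 \<and>
           u1 = 0 * (xv * yv) - xv * yv * g"
proof -
  have "xv * (yv * u0) = - (u1 * fpoly p q)" using assms(4)
    by (metis minus_equation_iff mult.assoc)
  also have "\<dots> = fpoly p q * (- u1)" by (metis mult.commute mult_minus_right)
  finally have "xv * (yv * u0) = fpoly p q * (- u1)" .
  hence "fpoly p q dvd xv * (yv * u0)" by simp
  hence "fpoly p q dvd yv * u0" using divA[OF assms(1)] by blast
  hence "fpoly p q dvd u0" using divB[OF assms(1,2)] by blast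
  then obtain g where g: "u0 = fpoly p q * g" by (auto elim: dvdE)
  have "fpoly p q * u1 = u1 * fpoly p q" by (rule mult.commute)
  also have "\<dots> = - (xv * yv * (fpoly p q * g))" using assms(4) g by simp
  also have "\<dots> = fpoly p q * (- (xv * yv * g))" by (metis mult.commute mult.left_commute mult_minus_right)
  finally have "fpoly p q * u1 = fpoly p q * (- (xv * yv * g))" .
  hence u1: "u1 = - (xv * yv * g)" using f_nz[OF assms(1)] mult_left_cancel by blast
  have "hom_deg p q (k * int p, k) g" using quot_hom[OF assms(1,2)] assms(3) g by simp
  thus ?thesis using g u1 by (intro exI[of _ g]) (simp add: algebra_simps)
qed

theorem lemma2p6:
  fixes p q :: nat
  assumes "p \<ge> 2" and "q \<ge> 2"
  shows "is_gmf p q (Kf p q) \<and>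
    (\<forall>n::int. \<forall>u0 u1. is_mor p q (Kf p q) (shiftN p n (Kf p q)) u0 u1 \<longrightarrow>
       (if n = 0 then (\<exists>a::complex. homotopic p q (Kf p q) (Kf p q) u0 u1 (mscal (cst a)) (mscal (cst a)))
        else null_htp p q (Kf p q) (shiftN p n (Kf p q)) u0 u1)) \<and>
    \<not> null_htp p q (Kf p q) (Kf p q) (mscal 1) (mscal 1)"
proof (intro conjI allI impI)
  show "is_gmf p q (Kf p q)" using Kf_gmf[OF assms] .
  show "\<not> null_htp p q (Kf p q) (Kf p q) (mscal 1) (mscal 1)" using not_null[OF assms] .
  fix n :: int and u0 u1
  assume mor: "is_mor p q (Kf p q) (shiftN p n (Kf p q)) u0 u1"
  note defs = is_mor_def null_htp_def homotopic_def Let_def graded_map_def meq_def mmul_def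
    madd_def msub_def mneg_def mscal_def Kf_def shiftN_def twist_def shift1_def twist_gens_def
    lsub_def lscale_def cvec_def
  show "if n = 0 then (\<exists>a::complex. homotopic p q (Kf p q) (Kf p q) u0 u1 (mscal (cst a)) (mscal (cst a)))
        else null_htp p q (Kf p q) (shiftN p n (Kf p q)) u0 u1"
  proof (cases "n = 0")
    case True
    have "hom_deg p q (0, 0) (u0 0 0) \<and> u0 0 0 = u1 0 0" using mor True f_nz[OF assms(1)]
      by (simp add: defs)
    hence h: "hom_deg p q (0, 0) (u0 0 0)" and e: "u1 0 0 = u0 0 0" by auto
    define a where "a = cf (u0 0 0) 0 0"
    have c: "u0 0 0 = cst a" unfolding a_def by (rule zero_case[OF assms h])
    show ?thesis using True
      apply (simp add: defs)
      apply (rule exI[of _ a], rule exI[of _ "\<lambda>_ _. 0"], simp, rule exI[of _ "\<lambda>_ _. 0"])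
      using c e by simp
  next
    case False
    show ?thesis
    proof (cases "even n")
      case True
      have "hom_deg p q (n div 2 * int p, n div 2) (u0 0 0) \<and> u0 0 0 = u1 0 0" using mor True f_nz[OF assms(1)]
        by (simp add: defs)
      hence h: "hom_deg p q (n div 2 * int p, n div 2) (u0 0 0)" and e: "u1 0 0 = u0 0 0" by auto
      have "n div 2 \<noteq> 0" using True False by auto
      from even_case[OF assms this h] obtain h0 h1 where
        hh: "hom_deg p q (n div 2 * int p - 1, n div 2 - 1) h0"
        "hom_deg p q (n div 2 * int p - (int p - 1), n div 2) h1"
        "u0 0 0 = xv * yv * h0 + h1 * fpoly p q" unfolding Rep_def by blast
      show ?thesis using True False
        apply (simp add: defs)
        apply (rule exI[of _ "\<lambda>_ _. h0"], simp add: hh, rule exI[of _ "\<lambda>_ _. h1"])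
        using hh e by (simp add: algebra_simps)
    next
      case odd: False
      have "hom_deg p q (int p - 1 + n div 2 * int p, n div 2) (u0 0 0) \<and>
         - (xv * yv * u0 0 0) = u1 0 0 * fpoly p q" using mor odd
        by (simp add: defs)
      hence h: "hom_deg p q (int p - 1 + n div 2 * int p, n div 2) (u0 0 0)"
        and e: "- (xv * yv * u0 0 0) = u1 0 0 * fpoly p q" by auto
      from odd_case[OF assms h e] obtain g where
        gg: "hom_deg p q (n div 2 * int p, n div 2) g" "u0 0 0 = g * fpoly p q - fpoly p q * 0"
          "u1 0 0 = 0 * (xv * yv) - xv * yv * g" by blast
      show ?thesis using odd False
        apply (simp add: defs)
        apply (rule exI[of _ "\<lambda>_ _. 0"], simp, rule exI[of _ "\<lambda>_ _. g"])
        using gg by simp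
    qed
  qed
qed

end
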